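(* Let $\mathscr{X}$ be a complex Banach space and let $\mathfrak{M}\subseteq\mathfrak{C}(\mathscr{X})$ be either (i) a well-ordered nest, or (ii) a lattice of subspaces of the form $\mathfrak{M}=\mathfrak{C}_1\cup\cdots\cup\mathfrak{C}_n$ with $n\ge 2$, where $\mathfrak{C}_i=\{\{0\}\subsetneq\mathscr{M}^{(i)}_1\subsetneq\cdots\subsetneq\mathscr{M}^{(i)}_{q_i}\subsetneq\mathscr{X}\}$ ($q_i\ge1$), any non-trivial subspaces $\mathscr{M}^{(i)}_k$ and $\mathscr{M}^{(j)}_l$ with $i\neq j$ are incomparable under inclusion, and $q_i\neq q_j$ whenever $i\neq j$. Then $\mathrm{Col}(\mathfrak{M})=\mathrm{Grp}(\mathrm{Alg}(\mathfrak{M}))$.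
   Context: A nest is a family of closed subspaces containing $\{0\}$ and $\mathscr{X}$, totally ordered by inclusion and closed under arbitrary intersections and closed linear spans; it is well-ordered if every non-empty subset has a least element. A lattice of subspaces is a family of closed subspaces containing $\{0\},\mathscr{X}$ closed under $\cap$ and $\overline{\,\cdot+\cdot\,}$. $\mathrm{Alg}(\mathfrak{F})$ is the set of bounded operators leaving every subspace of $\mathfrak{F}$ invariant; $\mathrm{Grp}(\mathcal{A})$ is the group of invertible $S\in\mathcal{A}$ with $S^{-1}\in\mathcal{A}$. $\mathrm{Col}(\mathfrak{F})$ is the group of invertible $S\in\mathcal{B}(\mathscr{X})$ such that for every closed subspace $\mathscr{M}$: $\mathscr{M}\in\mathfrak{F}$ iff $S\mathscr{M}\in\mathfrak{F}$. *)

theory Defs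
  imports "HOL-Analysis.Analysis"
begin

class complex_banach = banach +
  fixes scaleC :: "complex \<Rightarrow> 'a \<Rightarrow> 'a"
  assumes scaleC_add_right: "scaleC a (x + y) = scaleC a x + scaleC a y"
    and scaleC_add_left: "scaleC (a + b) x = scaleC a x + scaleC b x"
    and scaleC_scaleC: "scaleC a (scaleC b x) = scaleC (a * b) x"
    and scaleC_one: "scaleC 1 x = x"
    and scaleC_of_real: "scaleC (of_real r) x = scaleR r x"
    and norm_scaleC: "norm (scaleC a x) = cmod a * norm x"

definition clinear_op :: "('a::complex_banach \<Rightarrow> 'a) \<Rightarrow> bool" where
  "clinear_op T \<longleftrightarrow> (\<forall>x y. T (x + y) = T x + T y) \<and> (\<forall>a x. T (scaleC a x) = scaleC a (T x))"

definition bops :: "('a::complex_banach \<Rightarrow> 'a) set" where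
  "bops = {T. clinear_op T \<and> (\<exists>K. \<forall>x. norm (T x) \<le> K * norm x)}"

definition invertible_op :: "('a::complex_banach \<Rightarrow> 'a) \<Rightarrow> bool" where
  "invertible_op S \<longleftrightarrow> S \<in> bops \<and> bij S \<and> inv S \<in> bops"

definition csubspace :: "'a::complex_banach set \<Rightarrow> bool" where
  "csubspace M \<longleftrightarrow> 0 \<in> M \<and> (\<forall>x\<in>M. \<forall>y\<in>M. x + y \<in> M) \<and> (\<forall>a. \<forall>x\<in>M. scaleC a x \<in> M)"

definition cspan :: "'a::complex_banach set \<Rightarrow> 'a set" where
  "cspan A = \<Inter>{M. csubspace M \<and> A \<subseteq> M}"

definition closed_subspaces :: "'a::complex_banach set set" where
  "closed_subspaces = {M. csubspace M \<and> closed M}"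

definition is_nest :: "'a::complex_banach set set \<Rightarrow> bool" where
  "is_nest F \<longleftrightarrow> F \<subseteq> closed_subspaces \<and> {0} \<in> F \<and> UNIV \<in> F
     \<and> (\<forall>A\<in>F. \<forall>B\<in>F. A \<subseteq> B \<or> B \<subseteq> A)
     \<and> (\<forall>G. G \<subseteq> F \<longrightarrow> \<Inter>G \<in> F)
     \<and> (\<forall>G. G \<subseteq> F \<longrightarrow> closure (cspan (\<Union>G)) \<in> F)"

definition well_ordered_nest :: "'a::complex_banach set set \<Rightarrow> bool" where
  "well_ordered_nest F \<longleftrightarrow> is_nest F \<and> (\<forall>G. G \<subseteq> F \<and> G \<noteq> {} \<longrightarrow> (\<exists>m\<in>G. \<forall>A\<in>G. m \<subseteq> A))"

definition subspace_lattice :: "'a::complex_banach set set \<Rightarrow> bool" where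
  "subspace_lattice F \<longleftrightarrow> F \<subseteq> closed_subspaces \<and> {0} \<in> F \<and> UNIV \<in> F
     \<and> (\<forall>A\<in>F. \<forall>B\<in>F. A \<inter> B \<in> F \<and> closure {a + b | a b. a \<in> A \<and> b \<in> B} \<in> F)"

definition chain_union_lattice :: "'a::complex_banach set set \<Rightarrow> bool" where
  "chain_union_lattice F \<longleftrightarrow> subspace_lattice F \<and>
    (\<exists>(n::nat) (q::nat \<Rightarrow> nat) (Ms::nat \<Rightarrow> nat \<Rightarrow> 'a set).
       n \<ge> 2
     \<and> (\<forall>i\<in>{1..n}. q i \<ge> 1)
     \<and> (\<forall>i\<in>{1..n}. {0} \<subset> Ms i 1 \<and> Ms i (q i) \<subset> UNIV
                      \<and> (\<forall>k. 1 \<le> k \<and> k < q i \<longrightarrow> Ms i k \<subset> Ms i (Suc k)))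
     \<and> (\<forall>i\<in>{1..n}. \<forall>j\<in>{1..n}. i \<noteq> j \<longrightarrow>
          (\<forall>k\<in>{1..q i}. \<forall>l\<in>{1..q j}. \<not> Ms i k \<subseteq> Ms j l \<and> \<not> Ms j l \<subseteq> Ms i k))
     \<and> (\<forall>i\<in>{1..n}. \<forall>j\<in>{1..n}. i \<noteq> j \<longrightarrow> q i \<noteq> q j)
     \<and> F = (\<Union>i\<in>{1..n}. {{0}, UNIV} \<union> {Ms i k | k. k \<in> {1..q i}}))"

definition Alg :: "'a::complex_banach set set \<Rightarrow> ('a \<Rightarrow> 'a) set" where
  "Alg F = {T \<in> bops. \<forall>M\<in>F. T ` M \<subseteq> M}"

definition Grp :: "('a::complex_banach \<Rightarrow> 'a) set \<Rightarrow> ('a \<Rightarrow> 'a) set" where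
  "Grp A = {S \<in> A. invertible_op S \<and> inv S \<in> A}"

definition Col :: "'a::complex_banach set set \<Rightarrow> ('a \<Rightarrow> 'a) set" where
  "Col F = {S. invertible_op S \<and> (\<forall>M\<in>closed_subspaces. M \<in> F \<longleftrightarrow> S ` M \<in> F)}"

end

theory Submission
  imports Defs
begin

lemma chain_strict:
  fixes Ms :: "nat \<Rightarrow> 'b set"
  assumes ch: "\<forall>k. 1 \<le> k \<and> k < q \<longrightarrow> Ms k \<subset> Ms (Suc k)"
  shows "1 \<le> k \<Longrightarrow> k < l \<Longrightarrow> l \<le> q \<Longrightarrow> Ms k \<subset> Ms l"
proof (induction l)
  case 0 then show ?case by simp
next
  case (Suc l)
  show ?case
  proof (cases "k = l")
    case True then show ?thesis using ch Suc.prems by auto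
  next
    case False
    then have "Ms k \<subset> Ms l" using Suc by auto
    moreover have "Ms l \<subset> Ms (Suc l)" using ch Suc.prems False by auto
    ultimately show ?thesis by blast
  qed
qed

lemma chain_le:
  fixes Ms :: "nat \<Rightarrow> 'b set"
  assumes ch: "\<forall>k. 1 \<le> k \<and> k < q \<longrightarrow> Ms k \<subset> Ms (Suc k)"
  shows "1 \<le> k \<Longrightarrow> k \<le> l \<Longrightarrow> l \<le> q \<Longrightarrow> Ms k \<subseteq> Ms l"
  using chain_strict[OF ch, of k l] by (cases "k = l") auto

lemma chain_inj:
  fixes Ms :: "nat \<Rightarrow> 'b set"
  assumes ch: "\<forall>k. 1 \<le> k \<and> k < q \<longrightarrow> Ms k \<subset> Ms (Suc k)"
  shows "inj_on Ms {1..q}"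
proof (rule inj_onI)
  fix a b assume ab: "a \<in> {1..q}" "b \<in> {1..q}" "Ms a = Ms b"
  show "a = b"
  proof (rule ccontr)
    assume "a \<noteq> b"
    then consider "a < b" | "b < a" by linarith
    then show False
      using chain_strict[OF ch, of a b] chain_strict[OF ch, of b a] ab by (cases; auto)
  qed
qed

lemma Fcases:
  assumes F: "F = (\<Union>i\<in>{1..n}. {{0}, UNIV} \<union> {Ms i k | k. k \<in> {1..q i}})" and Y: "Y \<in> F"
  shows "Y = {0} \<or> Y = UNIV \<or> (\<exists>j l. j \<in> {1..n} \<and> l \<in> {1..q j} \<and> Y = Ms j l)"
  using Y unfolding F by blast

lemma cards:
  fixes Ms :: "nat \<Rightarrow> nat \<Rightarrow> 'b::zero set"
  assumes hyps: "\<forall>i\<in>{1..n}. {0} \<subset> Ms i 1 \<and> Ms i (q i) \<subset> UNIV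
                      \<and> (\<forall>k. 1 \<le> k \<and> k < q i \<longrightarrow> Ms i k \<subset> Ms i (Suc k))"
   and inc: "\<forall>i\<in>{1..n}. \<forall>j\<in>{1..n}. i \<noteq> j \<longrightarrow>
          (\<forall>k\<in>{1..q i}. \<forall>l\<in>{1..q j}. \<not> Ms i k \<subseteq> Ms j l \<and> \<not> Ms j l \<subseteq> Ms i k)"
   and F: "F = (\<Union>i\<in>{1..n}. {{0}, UNIV} \<union> {Ms i k | k. k \<in> {1..q i}})"
   and i: "i \<in> {1..n}" and k: "k \<in> {1..q i}"
  shows "card {Y\<in>F. Y \<subset> Ms i k} = k \<and> card {Y\<in>F. Ms i k \<subset> Y} = q i - k + 1"
proof -
  have ch: "\<forall>k. 1 \<le> k \<and> k < q i \<longrightarrow> Ms i k \<subset> Ms i (Suc k)" using hyps i by blast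
  have z: "{0} \<subset> Ms i 1" and u: "Ms i (q i) \<subset> UNIV" using hyps i by auto
  note le = chain_le[OF ch] and lt = chain_strict[OF ch]
  have inj: "inj_on (Ms i) {1..q i}" by (rule chain_inj[OF ch])
  have zl: "{0} \<subset> Ms i l" if "l \<in> {1..q i}" for l using z le[of 1 l] that by auto
  have ul: "Ms i l \<subset> UNIV" if "l \<in> {1..q i}" for l using u le[of l "q i"] that by auto
  have inF: "Ms i l \<in> F" if "l \<in> {1..q i}" for l
    unfolding F by (rule UN_I[OF i]) (use that in blast)
  have zF: "{0} \<in> F" "UNIV \<in> F" unfolding F by (rule UN_I[OF i], blast)+
  have D: "{Y\<in>F. Y \<subset> Ms i k} = insert {0} (Ms i ` {1..<k})"
  proof (intro equalityI subsetI)
    fix Y assume Y: "Y \<in> {Y\<in>F. Y \<subset> Ms i k}"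
    then have YF: "Y \<in> F" and Ys: "Y \<subset> Ms i k" by auto
    from Fcases[OF F YF] consider "Y = {0}" | "Y = UNIV" | j l where "j \<in> {1..n}" "l \<in> {1..q j}" "Y = Ms j l"
      by blast
    then show "Y \<in> insert {0} (Ms i ` {1..<k})"
    proof cases
      case 1 then show ?thesis by simp
    next
      case 2 then show ?thesis using Ys ul[OF k] by auto
    next
      case (3 j l)
      show ?thesis
      proof (cases "j = i")
        case False then show ?thesis using inc[rule_format, OF i 3(1) _ k 3(2)] Ys 3(3) by auto
      next
        case True
        have "\<not> k \<le> l" using le[of k l] 3 True Ys k by auto
        then show ?thesis using 3 True by auto
      qed
    qed
  next
    fix Y assume "Y \<in> insert {0} (Ms i ` {1..<k})"
    then consider "Y = {0}" | l where "l \<in> {1..<k}" "Y = Ms i l" by blast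
    then show "Y \<in> {Y\<in>F. Y \<subset> Ms i k}"
    proof cases
      case 1 then show ?thesis using zl[OF k] zF by simp
    next
      case (2 l) then show ?thesis using inF[of l] lt[of l k] k by simp
    qed
  qed
  have U: "{Y\<in>F. Ms i k \<subset> Y} = insert UNIV (Ms i ` {k<..q i})"
  proof (intro equalityI subsetI)
    fix Y assume Y: "Y \<in> {Y\<in>F. Ms i k \<subset> Y}"
    then have YF: "Y \<in> F" and Ys: "Ms i k \<subset> Y" by auto
    from Fcases[OF F YF] consider "Y = {0}" | "Y = UNIV" | j l where "j \<in> {1..n}" "l \<in> {1..q j}" "Y = Ms j l"
      by blast
    then show "Y \<in> insert UNIV (Ms i ` {k<..q i})"
    proof cases
      case 1 then show ?thesis using Ys zl[OF k] by auto
    next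
      case 2 then show ?thesis by simp
    next
      case (3 j l)
      show ?thesis
      proof (cases "j = i")
        case False then show ?thesis using inc[rule_format, OF i 3(1) _ k 3(2)] Ys 3(3) by auto
      next
        case True
        have "\<not> l \<le> k" using le[of l k] 3 True Ys k by auto
        then show ?thesis using 3 True by auto
      qed
    qed
  next
    fix Y assume "Y \<in> insert UNIV (Ms i ` {k<..q i})"
    then consider "Y = UNIV" | l where "l \<in> {k<..q i}" "Y = Ms i l" by blast
    then show "Y \<in> {Y\<in>F. Ms i k \<subset> Y}"
    proof cases
      case 1 then show ?thesis using ul[OF k] zF by simp
    next
      case (2 l) then show ?thesis using inF[of l] lt[of k l] k by simp
    qed
  qed
  have s1: "{1..<k} \<subseteq> {1..q i}" using k by auto
  have s2: "{k<..q i} \<subseteq> {1..q i}" using k by auto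
  have c1: "card (Ms i ` {1..<k}) = k - 1"
    using card_image[OF inj_on_subset[OF inj s1]] by simp
  have c2: "card (Ms i ` {k<..q i}) = q i - k"
    using card_image[OF inj_on_subset[OF inj s2]] by simp
  have n1: "{0} \<notin> Ms i ` {1..<k}"
  proof
    assume "{0} \<in> Ms i ` {1..<k}"
    then obtain l where "l \<in> {1..<k}" "{0} = Ms i l" by blast
    then show False using zl[of l] s1 by auto
  qed
  have n2: "UNIV \<notin> Ms i ` {k<..q i}"
  proof
    assume "UNIV \<in> Ms i ` {k<..q i}"
    then obtain l where "l \<in> {k<..q i}" "UNIV = Ms i l" by blast
    then show False using ul[of l] s2 by auto
  qed
  have f1: "finite (Ms i ` {1..<k})" by simp
  have f2: "finite (Ms i ` {k<..q i})" by simp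
  have "card {Y\<in>F. Y \<subset> Ms i k} = Suc (k - 1)"
    unfolding D using card_insert_disjoint[OF f1 n1] c1 by simp
  moreover have "card {Y\<in>F. Ms i k \<subset> Y} = Suc (q i - k)"
    unfolding U using card_insert_disjoint[OF f2 n2] c2 by simp
  ultimately show ?thesis using k by simp
qed

lemma wo_fix:
  assumes wo: "well_ordered_nest F" and inj: "inj S" and fF: "(image S) ` F = F"
  shows "\<forall>N\<in>F. S ` N = N"
proof (rule ccontr)
  assume "\<not> (\<forall>N\<in>F. S ` N = N)"
  then have ne: "{N\<in>F. S ` N \<noteq> N} \<noteq> {}" by auto
  have wo2: "\<forall>G. G \<subseteq> F \<and> G \<noteq> {} \<longrightarrow> (\<exists>m\<in>G. \<forall>A\<in>G. m \<subseteq> A)"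
    using wo unfolding well_ordered_nest_def by (rule conjunct2)
  have "\<exists>m\<in>{N\<in>F. S ` N \<noteq> N}. \<forall>A\<in>{N\<in>F. S ` N \<noteq> N}. m \<subseteq> A"
    using wo2[rule_format, of "{N\<in>F. S ` N \<noteq> N}"] ne by auto
  then obtain m where m1: "m \<in> {N\<in>F. S ` N \<noteq> N}" and m2: "\<forall>A\<in>{N\<in>F. S ` N \<noteq> N}. m \<subseteq> A"
    by (elim bexE)
  have mF: "m \<in> F" and mS: "S ` m \<noteq> m" using m1 by auto
  have mmin: "m \<subseteq> A" if "A \<in> F" "S ` A \<noteq> A" for A using m2 that by blast
  have SmF: "S ` m \<in> F" using imageI[OF mF, of "image S"] fF by simp
  have tot: "\<forall>A\<in>F. \<forall>B\<in>F. A \<subseteq> B \<or> B \<subseteq> A"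
    using wo unfolding well_ordered_nest_def is_nest_def by (elim conjE)
  have "S ` m \<subseteq> m \<or> m \<subseteq> S ` m" using tot mF SmF by (meson bspec)
  then consider "S ` m \<subseteq> m" | "m \<subseteq> S ` m" by (elim disjE)
  then show False
  proof cases
    case 1
    have "S ` (S ` m) \<noteq> S ` m" using mS inj_image_eq_iff[OF inj] by simp
    then have "m \<subseteq> S ` m" using mmin[OF SmF] by simp
    then show False using 1 mS by (simp add: subset_antisym)
  next
    case 2
    obtain p where pF: "p \<in> F" and p: "m = S ` p" using fF mF by (metis imageE)
    have "S ` p \<noteq> p" using p mS by auto
    then have "m \<subseteq> p" using mmin[OF pF] by simp
    then have "S ` m \<subseteq> S ` p" by (rule image_mono)
    then have "S ` m \<subseteq> m" using p by simp
    then show False using 2 mS by (simp add: subset_antisym)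
  qed
qed

lemma cu_fix:
  fixes S :: "'a::complex_banach \<Rightarrow> 'a"
  assumes cu: "chain_union_lattice F" and inj: "inj S" and sur: "surj S" and S0: "S 0 = 0"
    and fF: "(image S) ` F = F"
  shows "\<forall>N\<in>F. S ` N = N"
proof -
  have ex: "\<exists>(n::nat) (q::nat \<Rightarrow> nat) (Ms::nat \<Rightarrow> nat \<Rightarrow> 'a set).
       n \<ge> 2
     \<and> (\<forall>i\<in>{1..n}. q i \<ge> 1)
     \<and> (\<forall>i\<in>{1..n}. {0} \<subset> Ms i 1 \<and> Ms i (q i) \<subset> UNIV
                      \<and> (\<forall>k. 1 \<le> k \<and> k < q i \<longrightarrow> Ms i k \<subset> Ms i (Suc k)))
     \<and> (\<forall>i\<in>{1..n}. \<forall>j\<in>{1..n}. i \<noteq> j \<longrightarrow>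
          (\<forall>k\<in>{1..q i}. \<forall>l\<in>{1..q j}. \<not> Ms i k \<subseteq> Ms j l \<and> \<not> Ms j l \<subseteq> Ms i k))
     \<and> (\<forall>i\<in>{1..n}. \<forall>j\<in>{1..n}. i \<noteq> j \<longrightarrow> q i \<noteq> q j)
     \<and> F = (\<Union>i\<in>{1..n}. {{0}, UNIV} \<union> {Ms i k | k. k \<in> {1..q i}})"
    using cu unfolding chain_union_lattice_def by (rule conjunct2)
  then obtain n q and Ms :: "nat \<Rightarrow> nat \<Rightarrow> 'a set" where
    H: "n \<ge> 2
     \<and> (\<forall>i\<in>{1..n}. q i \<ge> 1)
     \<and> (\<forall>i\<in>{1..n}. {0} \<subset> Ms i 1 \<and> Ms i (q i) \<subset> UNIV
                      \<and> (\<forall>k. 1 \<le> k \<and> k < q i \<longrightarrow> Ms i k \<subset> Ms i (Suc k)))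
     \<and> (\<forall>i\<in>{1..n}. \<forall>j\<in>{1..n}. i \<noteq> j \<longrightarrow>
          (\<forall>k\<in>{1..q i}. \<forall>l\<in>{1..q j}. \<not> Ms i k \<subseteq> Ms j l \<and> \<not> Ms j l \<subseteq> Ms i k))
     \<and> (\<forall>i\<in>{1..n}. \<forall>j\<in>{1..n}. i \<noteq> j \<longrightarrow> q i \<noteq> q j)
     \<and> F = (\<Union>i\<in>{1..n}. {{0}, UNIV} \<union> {Ms i k | k. k \<in> {1..q i}})"
    by (elim exE)
  have hyps: "\<forall>i\<in>{1..n}. {0} \<subset> Ms i 1 \<and> Ms i (q i) \<subset> UNIV
                      \<and> (\<forall>k. 1 \<le> k \<and> k < q i \<longrightarrow> Ms i k \<subset> Ms i (Suc k))"
    using H by (elim conjE)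
  have inc: "\<forall>i\<in>{1..n}. \<forall>j\<in>{1..n}. i \<noteq> j \<longrightarrow>
          (\<forall>k\<in>{1..q i}. \<forall>l\<in>{1..q j}. \<not> Ms i k \<subseteq> Ms j l \<and> \<not> Ms j l \<subseteq> Ms i k)"
    using H by (elim conjE)
  have dist: "\<forall>i\<in>{1..n}. \<forall>j\<in>{1..n}. i \<noteq> j \<longrightarrow> q i \<noteq> q j"
    using H by (elim conjE)
  have F: "F = (\<Union>i\<in>{1..n}. {{0}, UNIV} \<union> {Ms i k | k. k \<in> {1..q i}})"
    using H by (elim conjE)
  note C = cards[OF hyps inc F]
  have sub: "S ` A \<subset> S ` B \<longleftrightarrow> A \<subset> B" for A B
    by (simp add: less_le inj_image_subset_iff[OF inj] inj_image_eq_iff[OF inj])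
  have injf: "inj_on (image S) X" for X
    by (rule inj_onI) (simp add: inj_image_eq_iff[OF inj])
  have SF: "S ` Y \<in> F" if "Y \<in> F" for Y
    using imageI[OF that, of "image S"] fF by simp
  have preF: "\<exists>Y\<in>F. Z = S ` Y" if "Z \<in> F" for Z
    using that fF by (metis imageE)
  have down: "card {Y\<in>F. Y \<subset> S ` X} = card {Y\<in>F. Y \<subset> X}" if "X \<in> F" for X
  proof -
    have "image S ` {Y\<in>F. Y \<subset> X} = {Y\<in>F. Y \<subset> S ` X}"
    proof (intro equalityI subsetI)
      fix Z assume "Z \<in> image S ` {Y\<in>F. Y \<subset> X}"
      then obtain Y where "Y \<in> F" "Y \<subset> X" "Z = S ` Y" by (elim imageE) blast
      then show "Z \<in> {Y\<in>F. Y \<subset> S ` X}" using SF sub by simp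
    next
      fix Z assume Z: "Z \<in> {Y\<in>F. Y \<subset> S ` X}"
      then have ZF: "Z \<in> F" by simp
      obtain Y where Y: "Y \<in> F" "Z = S ` Y" using preF[OF ZF] by (elim bexE)
      then have "Y \<subset> X" using Z sub by simp
      then have "Y \<in> {Y\<in>F. Y \<subset> X}" using Y(1) by simp
      then show "Z \<in> image S ` {Y\<in>F. Y \<subset> X}" using Y(2) by (rule rev_image_eqI)
    qed
    then show ?thesis using card_image[OF injf] by metis
  qed
  have up: "card {Y\<in>F. S ` X \<subset> Y} = card {Y\<in>F. X \<subset> Y}" if "X \<in> F" for X
  proof -
    have "image S ` {Y\<in>F. X \<subset> Y} = {Y\<in>F. S ` X \<subset> Y}"
    proof (intro equalityI subsetI)
      fix Z assume "Z \<in> image S ` {Y\<in>F. X \<subset> Y}"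
      then obtain Y where "Y \<in> F" "X \<subset> Y" "Z = S ` Y" by (elim imageE) blast
      then show "Z \<in> {Y\<in>F. S ` X \<subset> Y}" using SF sub by simp
    next
      fix Z assume Z: "Z \<in> {Y\<in>F. S ` X \<subset> Y}"
      then have ZF: "Z \<in> F" by simp
      obtain Y where Y: "Y \<in> F" "Z = S ` Y" using preF[OF ZF] by (elim bexE)
      then have "X \<subset> Y" using Z sub by simp
      then have "Y \<in> {Y\<in>F. X \<subset> Y}" using Y(1) by simp
      then show "Z \<in> image S ` {Y\<in>F. X \<subset> Y}" using Y(2) by (rule rev_image_eqI)
    qed
    then show ?thesis using card_image[OF injf] by metis
  qed
  have f0: "S ` {0} = {0}" using S0 by simp
  have fU: "S ` UNIV = UNIV" using sur by simp
  show ?thesis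
  proof
    fix N assume NF: "N \<in> F"
    from Fcases[OF F NF] consider "N = {0}" | "N = UNIV" | i k where "i \<in> {1..n}" "k \<in> {1..q i}" "N = Ms i k"
      by blast
    then show "S ` N = N"
    proof cases
      case 1 then show ?thesis using f0 by simp
    next
      case 2 then show ?thesis using fU by simp
    next
      case (3 i k)
      have ch: "\<forall>k. 1 \<le> k \<and> k < q i \<longrightarrow> Ms i k \<subset> Ms i (Suc k)"
        and z1: "{0} \<subset> Ms i 1" and uq: "Ms i (q i) \<subset> UNIV" using hyps 3(1) by auto
      have "Ms i 1 \<subseteq> Ms i k" "Ms i k \<subseteq> Ms i (q i)" using chain_le[OF ch] 3(2) by auto
      then have zi: "{0} \<subset> Ms i k" and ui: "Ms i k \<subset> UNIV" using z1 uq by auto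
      have SNF: "S ` N \<in> F" using SF[OF NF] .
      have "S ` N \<noteq> {0}"
      proof
        assume "S ` N = {0}"
        then have "S ` N = S ` {0}" using f0 by simp
        then have "N = {0}" by (rule iffD1[OF inj_image_eq_iff[OF inj]])
        then show False using zi 3(3) by simp
      qed
      moreover have "S ` N \<noteq> UNIV"
      proof
        assume "S ` N = UNIV"
        then have "S ` N = S ` UNIV" using fU by simp
        then have "N = UNIV" by (rule iffD1[OF inj_image_eq_iff[OF inj]])
        then show False using ui 3(3) by simp
      qed
      ultimately obtain j l where j: "j \<in> {1..n}" "l \<in> {1..q j}" "S ` N = Ms j l"
        using Fcases[OF F SNF] by blast
      have Cj: "card {Y\<in>F. Y \<subset> S ` N} = l \<and> card {Y\<in>F. S ` N \<subset> Y} = q j - l + 1"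
        unfolding j(3) by (rule C[OF j(1,2)])
      have Ci: "card {Y\<in>F. Y \<subset> N} = k \<and> card {Y\<in>F. N \<subset> Y} = q i - k + 1"
        unfolding 3(3) by (rule C[OF 3(1,2)])
      have "l = k" using down[OF NF] Cj Ci by linarith
      moreover have "q j - l + 1 = q i - k + 1" using up[OF NF] Cj Ci by linarith
      moreover have "l \<le> q j" "k \<le> q i" using j(2) 3(2) by auto
      ultimately have "q j = q i" by linarith
      then have "j = i" using dist j(1) 3(1) by blast
      then show ?thesis using j 3 \<open>l = k\<close> by simp
    qed
  qed
qed

lemma inv_props:
  fixes S :: "'a::complex_banach \<Rightarrow> 'a"
  assumes "invertible_op S"
  shows "inj S" "surj S" "S 0 = 0" "bounded_linear S" "clinear_op S"
proof -
  show "inj S" "surj S" using assms unfolding invertible_op_def bij_def by auto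
  have lin: "clinear_op S" and bnd: "\<exists>K. \<forall>x. norm (S x) \<le> K * norm x"
    using assms unfolding invertible_op_def bops_def by auto
  then show "clinear_op S" by simp
  have add: "S (x + y) = S x + S y" for x y using lin unfolding clinear_op_def by blast
  have sc: "S (scaleC a x) = scaleC a (S x)" for a x using lin unfolding clinear_op_def by blast
  have "S (0 + 0) = S 0 + S 0" by (rule add)
  then show "S 0 = 0" by simp
  from bnd obtain K where K: "\<And>x. norm (S x) \<le> K * norm x" by blast
  show "bounded_linear S"
  proof (rule bounded_linear_intro[where K=K])
    show "S (x + y) = S x + S y" for x y by (rule add)
    show "S (scaleR r x) = scaleR r (S x)" for r x
      using sc[of "of_real r" x] by (simp add: scaleC_of_real)
    show "norm (S x) \<le> norm x * K" for x using K[of x] by (simp add: mult.commute)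
  qed
qed

theorem theorem3p14:
  fixes M :: "'a::complex_banach set set"
  assumes "well_ordered_nest M \<or> chain_union_lattice M"
  shows "Col M = Grp (Alg M)"
proof (intro equalityI subsetI)
  fix S assume "S \<in> Col M"
  then have iv: "invertible_op S" and col: "\<And>N. N \<in> closed_subspaces \<Longrightarrow> N \<in> M \<longleftrightarrow> S ` N \<in> M"
    unfolding Col_def by auto
  note P = inv_props[OF iv]
  have add: "S (x + y) = S x + S y" for x y using P(5) unfolding clinear_op_def by blast
  have sc: "S (scaleC a x) = scaleC a (S x)" for a x using P(5) unfolding clinear_op_def by blast
  have MC: "M \<subseteq> closed_subspaces"
  proof (cases "well_ordered_nest M")
    case True
    then have "is_nest M" unfolding well_ordered_nest_def by (rule conjunct1)
    then show ?thesis unfolding is_nest_def by (rule conjunct1)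
  next
    case False
    then have "chain_union_lattice M" using assms by simp
    then have "subspace_lattice M" unfolding chain_union_lattice_def by (rule conjunct1)
    then show ?thesis unfolding subspace_lattice_def by (rule conjunct1)
  qed
  have fF: "image S ` M = M"
  proof (intro equalityI subsetI)
    fix X assume "X \<in> image S ` M"
    then obtain N where "N \<in> M" "X = S ` N" by blast
    then show "X \<in> M" using col MC by blast
  next
    fix X assume XM: "X \<in> M"
    then have Xc: "csubspace X" "closed X" using MC unfolding closed_subspaces_def by auto
    have "closed (S -` X)"
      by (rule continuous_closed_vimage[OF Xc(2)]) (rule linear_continuous_at[OF P(4)])
    moreover have "csubspace (S -` X)"
      using Xc(1) unfolding csubspace_def by (simp add: P(3) add sc)
    ultimately have "S -` X \<in> closed_subspaces" unfolding closed_subspaces_def by simp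
    moreover have "S ` (S -` X) = X" using P(2) by (simp add: surj_image_vimage_eq)
    ultimately have "S -` X \<in> M" using col XM by metis
    then show "X \<in> image S ` M" using \<open>S ` (S -` X) = X\<close> by (metis imageI)
  qed
  have fixS: "\<forall>N\<in>M. S ` N = N"
  proof (cases "well_ordered_nest M")
    case True then show ?thesis by (rule wo_fix[OF _ P(1) fF])
  next
    case False
    then have "chain_union_lattice M" using assms by simp
    then show ?thesis by (rule cu_fix[OF _ P(1) P(2) P(3) fF])
  qed
  have invfix: "inv S ` N = N" if "N \<in> M" for N
    using fixS that image_inv_f_f[OF P(1)] by metis
  have "S \<in> bops" "inv S \<in> bops" using iv unfolding invertible_op_def by auto
  then show "S \<in> Grp (Alg M)"
    unfolding Grp_def Alg_def using iv fixS invfix by auto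
next
  fix S assume "S \<in> Grp (Alg M)"
  then have SA: "\<And>N. N \<in> M \<Longrightarrow> S ` N \<subseteq> N" and iv: "invertible_op S"
    and IA: "\<And>N. N \<in> M \<Longrightarrow> inv S ` N \<subseteq> N"
    unfolding Grp_def Alg_def by auto
  note P = inv_props[OF iv]
  have eq: "S ` N = N" if "N \<in> M" for N
  proof
    show "S ` N \<subseteq> N" using SA that .
    show "N \<subseteq> S ` N"
    proof
      fix x assume "x \<in> N"
      then have "inv S x \<in> N" using IA that by blast
      moreover have "S (inv S x) = x" using P(2) by (simp add: surj_f_inv_f)
      ultimately show "x \<in> S ` N" by (metis imageI)
    qed
  qed
  show "S \<in> Col M"
    unfolding Col_def
  proof (intro CollectI conjI ballI iffI)
    show "invertible_op S" by (rule iv)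
  next
    fix N assume NM: "N \<in> M" then show "S ` N \<in> M" using eq[OF NM] by simp
  next
    fix N assume "S ` N \<in> M"
    then have "S ` (S ` N) = S ` N" by (rule eq)
    then have "S ` N = N" by (rule iffD1[OF inj_image_eq_iff[OF P(1)]])
    then show "N \<in> M" using \<open>S ` N \<in> M\<close> by simp
  qed
qed

end
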